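(* Let $X=\{1,\dots,k\}^{\mathbb N}$ with the shift $T$, let $\log p$ be a real Hölder continuous normalized potential with Gibbs state $\mu$, and let $H:X\to\mathbb R$ be a Hölder continuous positive function. For every $\beta\in\mathbb R$, let $\nu_\beta$ be the eigenprobability of $\mathcal L_{-\beta\log H}^*$. Then for every $\beta\in\mathbb R$, every $n\in\mathbb N$ and every continuous $f:X\to\mathbb C$, $$\int f\,d\nu_\beta=\int (\Lambda_n)^{-1}\,E_\mu(\Lambda_n f\mid \mathcal F_n)\,d\nu_\beta .$$
   Context: $X=\{1,\dots,k\}^{\mathbb N}$ with the product topology, $T$ the left shift (each point has exactly $k$ preimages). For continuous $A:X\to\mathbb R$ the Ruelle operator is $\mathcal L_A(f)(x)=\sum_{T(z)=x}e^{A(z)}f(z)$, and its dual acts on probabilities by $\int f\,d(\mathcal L_A^*\nu)=\int \mathcal L_A(f)\,d\nu$. The potential $\log p$ (with $p>0$ Hölder) is normalized: $\mathcal L_p(1)=\sum_{T(z)=x}p(z)=1$, where $\mathcal L_p:=\mathcal L_{\log p}$; $\mu$ is the probability with $\mathcal L_p^*\mu=\mu$. Write $\lambda=p^{-1}$, $\lambda^{[n]}(x)=\prod_{j=0}^{n-1}p(T^jx)^{-1}$, $H^{\beta[n]}(x)=\prod_{j=0}^{n-1}H(T^jx)^{\beta}$ and $\Lambda_n=H^{-\beta[n]}\lambda^{[n]}$. For Hölder positive $H$ and $\beta\in\mathbb R$, $\lambda_\beta>0$ denotes the largest eigenvalue of $\mathcal L_\beta:=\mathcal L_{-\beta\log H}$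 (so $\mathcal L_\beta f(x)=\sum_{T(z)=x}H(z)^{-\beta}f(z)$) and $\nu_\beta$ the unique probability with $\mathcal L_\beta^*\nu_\beta=\lambda_\beta\nu_\beta$. $\mathcal F_n=T^{-n}\mathcal B$ with $\mathcal B$ the Borel $\sigma$-algebra, and $E_\mu(f\mid\mathcal F_n)$ is the conditional expectation with respect to $\mu$; it equals $(\mathcal L_p^n f)\circ T^n$. *)

theory Defs
  imports "HOL-Probability.Probability"
begin

text \<open>The full shift on k symbols: sequences nat => nat with values in {1..k},
  carrying the product topology (the library topology on nat => nat, nat discrete).\<close>
definition shiftspace :: "nat \<Rightarrow> (nat \<Rightarrow> nat) set" where
  "shiftspace k = {x. \<forall>i. x i \<in> {1..k}}"

definition shift :: "(nat \<Rightarrow> nat) \<Rightarrow> (nat \<Rightarrow> nat)" where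
  "shift x = (\<lambda>i. x (Suc i))"

text \<open>The k preimages of x under the shift are the sequences a x, a in {1..k}.\<close>
definition scons :: "nat \<Rightarrow> (nat \<Rightarrow> nat) \<Rightarrow> (nat \<Rightarrow> nat)" where
  "scons a x = (\<lambda>i. case i of 0 \<Rightarrow> a | Suc j \<Rightarrow> x j)"

definition borelX :: "nat \<Rightarrow> (nat \<Rightarrow> nat) measure" where
  "borelX k = restrict_space borel (shiftspace k)"

definition sdist :: "(nat \<Rightarrow> nat) \<Rightarrow> (nat \<Rightarrow> nat) \<Rightarrow> real" where
  "sdist x y = (if x = y then 0 else (1/2) ^ (LEAST i. x i \<noteq> y i))"

definition holder :: "nat \<Rightarrow> ((nat \<Rightarrow> nat) \<Rightarrow> real) \<Rightarrow> bool" where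
  "holder k f \<longleftrightarrow> (\<exists>C \<alpha>. \<alpha> > 0 \<and>
     (\<forall>x\<in>shiftspace k. \<forall>y\<in>shiftspace k. \<bar>f x - f y\<bar> \<le> C * sdist x y powr \<alpha>))"

definition ruelle :: "nat \<Rightarrow> ((nat \<Rightarrow> nat) \<Rightarrow> real) \<Rightarrow> ((nat \<Rightarrow> nat) \<Rightarrow> 'b::real_algebra_1)
     \<Rightarrow> (nat \<Rightarrow> nat) \<Rightarrow> 'b" where
  "ruelle k A f x = (\<Sum>a\<in>{1..k}. of_real (exp (A (scons a x))) * f (scons a x))"

text \<open>L_A^* nu = c nu, via the definition of the dual action on continuous functions.\<close>
definition dual_eigen :: "nat \<Rightarrow> ((nat \<Rightarrow> nat) \<Rightarrow> real) \<Rightarrow> real \<Rightarrow> (nat \<Rightarrow> nat) measure \<Rightarrow> bool" where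
  "dual_eigen k A c \<nu> \<longleftrightarrow>
     (\<forall>g::(nat \<Rightarrow> nat) \<Rightarrow> real. continuous_on (shiftspace k) g \<longrightarrow>
        (\<integral>x. ruelle k A g x \<partial>\<nu>) = c * (\<integral>x. g x \<partial>\<nu>))"

text \<open>E_mu(g | F_n) = (L_p^n g) o T^n.\<close>
definition condexp :: "nat \<Rightarrow> ((nat \<Rightarrow> nat) \<Rightarrow> real) \<Rightarrow> nat
     \<Rightarrow> ((nat \<Rightarrow> nat) \<Rightarrow> 'b::real_algebra_1) \<Rightarrow> (nat \<Rightarrow> nat) \<Rightarrow> 'b" where
  "condexp k p n g x = ((ruelle k (\<lambda>z. ln (p z)) ^^ n) g) ((shift ^^ n) x)"

definition Lambda :: "((nat \<Rightarrow> nat) \<Rightarrow> real) \<Rightarrow> ((nat \<Rightarrow> nat) \<Rightarrow> real) \<Rightarrow> real \<Rightarrow> nat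
     \<Rightarrow> (nat \<Rightarrow> nat) \<Rightarrow> real" where
  "Lambda p H \<beta> n x = (\<Prod>j<n. H ((shift ^^ j) x) powr (-\<beta>)) * (\<Prod>j<n. 1 / p ((shift ^^ j) x))"

end

theory Submission imports Defs begin

lemma shiftspace_PiE: "shiftspace k = PiE UNIV (\<lambda>_. {1..k})"
  by (auto simp: shiftspace_def PiE_def extensional_def)

lemma compact_shiftspace: "compact (shiftspace k)"
proof -
  have "compactin (product_topology (\<lambda>i. euclidean) UNIV) (PiE UNIV (\<lambda>_::nat. {1..k::nat}))"
    by (simp add: compactin_PiE finite_imp_compact)
  then show ?thesis by (simp add: shiftspace_PiE euclidean_product_topology)
qed

lemma scons_in: "a \<in> {1..k} \<Longrightarrow> x \<in> shiftspace k \<Longrightarrow> scons a x \<in> shiftspace k"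
  by (auto simp: shiftspace_def scons_def split: nat.splits)

lemma shift_in: "x \<in> shiftspace k \<Longrightarrow> shift x \<in> shiftspace k"
  by (auto simp: shiftspace_def shift_def)

lemma shiftn_in: "x \<in> shiftspace k \<Longrightarrow> (shift ^^ n) x \<in> shiftspace k"
  by (induction n) (auto simp: shift_in)

lemma shift_scons[simp]: "shift (scons a x) = x"
  by (auto simp: shift_def scons_def)

lemma cont_shift: "continuous_on UNIV shift"
  unfolding shift_def by (intro continuous_on_coordinatewise_then_product) simp

lemma cont_shiftn: "continuous_on UNIV (shift ^^ n)"
proof (induction n)
  case 0 then show ?case by (simp add: continuous_on_id)
next
  case (Suc n)
  have "shift ^^ Suc n = shift \<circ> (shift ^^ n)" by simp
  then show ?case using continuous_on_compose[OF Suc cont_shift[THEN continuous_on_subset]] by auto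
qed

lemma cont_scons: "continuous_on UNIV (scons a)"
  unfolding scons_def
proof (intro continuous_on_coordinatewise_then_product)
  fix i show "continuous_on UNIV (\<lambda>x. case i of 0 \<Rightarrow> a | Suc j \<Rightarrow> x j)"
    by (cases i) auto
qed

lemma holder_cont:
  assumes "holder k f" shows "continuous_on (shiftspace k) f"
proof -
  obtain C \<alpha> where a: "\<alpha> > 0" and h: "\<forall>x\<in>shiftspace k. \<forall>y\<in>shiftspace k. \<bar>f x - f y\<bar> \<le> C * sdist x y powr \<alpha>"
    using assms unfolding holder_def by blast
  have lim: "(\<lambda>N. C * ((1/2) powr \<alpha>) ^ N) \<longlonglongrightarrow> 0"
    using a powr_less_mono'[of "1/2::real" 0 \<alpha>] by (intro tendsto_mult_right_zero LIMSEQ_power_zero) auto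
  show ?thesis unfolding continuous_on_topological
  proof (intro ballI allI impI)
    fix x B assume x: "x \<in> shiftspace k" and B: "open B" "f x \<in> B"
    then obtain e where e: "e > 0" "ball (f x) e \<subseteq> B" by (meson open_contains_ball)
    from lim e(1) obtain N where N: "\<bar>C * ((1/2) powr \<alpha>) ^ N\<bar> < e"
      using LIMSEQ_D[OF lim e(1)] by fastforce
    define A where "A = {y. \<forall>i\<in>{..<N}. y (id i) \<in> {x i}}"
    have op: "open {x i}" for i by (rule discrete_topology_class.open_discrete)
    have "open A" unfolding A_def by (intro product_topology_basis') (auto intro: op)
    moreover have "x \<in> A" by (auto simp: A_def)
    moreover have "f y \<in> B" if y: "y \<in> shiftspace k" "y \<in> A" for y
    proof (cases "x = y")
      case True then show ?thesis using B by simp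
    next
      case False
      then obtain i where "x i \<noteq> y i" by auto
      then have ex: "x (LEAST i. x i \<noteq> y i) \<noteq> y (LEAST i. x i \<noteq> y i)" by (rule LeastI)
      have "N \<le> (LEAST i. x i \<noteq> y i)"
      proof (rule ccontr)
        assume "\<not> ?thesis" then show False using ex y(2) by (auto simp: A_def)
      qed
      then have "((1/2::real) ^ (LEAST i. x i \<noteq> y i)) \<le> (1/2) ^ N"
        by (intro power_decreasing) auto
      then have "sdist x y powr \<alpha> \<le> ((1/2::real) ^ N) powr \<alpha>"
        using False a by (auto simp: sdist_def intro!: powr_mono2)
      also have "\<dots> = ((1/2) powr real N) powr \<alpha>" by (simp add: powr_realpow)
      also have "\<dots> = ((1/2) powr \<alpha>) powr real N" by (simp only: powr_powr mult.commute)
      also have "\<dots> = ((1/2) powr \<alpha>) ^ N" by (simp add: powr_realpow)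
      finally have s: "sdist x y powr \<alpha> \<le> ((1/2) powr \<alpha>) ^ N" .
      have "\<bar>f x - f y\<bar> \<le> C * sdist x y powr \<alpha>" using h x y by blast
      also have "\<dots> \<le> \<bar>C * ((1/2) powr \<alpha>) ^ N\<bar>"
      proof (cases "C \<ge> 0")
        case True then show ?thesis using mult_left_mono[OF s True] by simp
      next
        case False
        have "C * sdist x y powr \<alpha> \<le> 0" using False by (intro mult_nonpos_nonneg) auto
        then show ?thesis by linarith
      qed
      finally have "dist (f x) (f y) < e" using N by (simp add: dist_real_def)
      then show ?thesis using e by auto
    qed
    ultimately show "\<exists>A. open A \<and> x \<in> A \<and> (\<forall>y\<in>shiftspace k. y \<in> A \<longrightarrow> f y \<in> B)" by blast
  qed
qed

lemma comp_scons: "a \<in> {1..k} \<Longrightarrow> continuous_on (shiftspace k) g \<Longrightarrow> continuous_on (shiftspace k) (\<lambda>x. g (scons a x))"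
  by (rule continuous_on_compose2[OF _ continuous_on_subset[OF cont_scons]]) (auto simp: scons_in)

lemma comp_shiftn: "continuous_on (shiftspace k) g \<Longrightarrow> continuous_on (shiftspace k) (\<lambda>x. g ((shift ^^ n) x))"
  by (rule continuous_on_compose2[OF _ continuous_on_subset[OF cont_shiftn]]) (auto simp: shiftn_in)

lemma ruelle_cont:
  fixes g :: "(nat \<Rightarrow> nat) \<Rightarrow> 'b::real_normed_algebra_1"
  assumes "continuous_on (shiftspace k) A" "continuous_on (shiftspace k) g"
  shows "continuous_on (shiftspace k) (ruelle k A g)"
  unfolding ruelle_def
  by (intro continuous_intros comp_scons assms) auto

lemma ruelle_iter_cont:
  fixes g :: "(nat \<Rightarrow> nat) \<Rightarrow> 'b::real_normed_algebra_1"
  assumes "continuous_on (shiftspace k) A" "continuous_on (shiftspace k) g"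
  shows "continuous_on (shiftspace k) ((ruelle k A ^^ n) g)"
  by (induction n) (auto intro: ruelle_cont assms)

lemma space_nu: "sets \<nu> = sets (borelX k) \<Longrightarrow> space \<nu> = shiftspace k"
  using sets_eq_imp_space_eq[of \<nu> "borelX k"] by (simp add: borelX_def space_restrict_space)

lemma cont_integrable:
  fixes g :: "(nat \<Rightarrow> nat) \<Rightarrow> 'b::{banach,second_countable_topology}"
  assumes s: "sets \<nu> = sets (borelX k)" and pr: "prob_space \<nu>" and c: "continuous_on (shiftspace k) g"
  shows "integrable \<nu> g"
proof -
  have "bounded (g ` shiftspace k)" by (intro compact_imp_bounded compact_continuous_image c compact_shiftspace)
  then obtain B where B: "\<forall>x\<in>shiftspace k. norm (g x) \<le> B" by (auto simp: bounded_iff)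
  have m: "g \<in> borel_measurable \<nu>"
    unfolding measurable_cong_sets[OF s refl] borelX_def
    by (rule borel_measurable_continuous_on_restrict[OF c])
  interpret prob_space \<nu> by (rule pr)
  show ?thesis
    by (rule integrable_const_bound[where B=B]) (use B space_nu[OF s] m in auto)
qed

lemma split_int:
  assumes s: "sets \<nu> = sets (borelX k)" and pr: "prob_space \<nu>"
    and ca: "continuous_on (shiftspace k) (a :: _ \<Rightarrow> real)" and cb: "continuous_on (shiftspace k) (b :: _ \<Rightarrow> real)"
  shows "(\<integral>x. (of_real (a x) + \<i> * of_real (b x) :: complex) \<partial>\<nu>) = of_real (\<integral>x. a x \<partial>\<nu>) + \<i> * of_real (\<integral>x. b x \<partial>\<nu>)"
proof -
  have ia: "integrable \<nu> (\<lambda>x. complex_of_real (a x))"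
    by (rule cont_integrable[OF s pr]) (intro continuous_intros ca)
  have ib: "integrable \<nu> (\<lambda>x. \<i> * complex_of_real (b x))"
    by (rule cont_integrable[OF s pr]) (intro continuous_intros cb)
  show ?thesis
    by (simp add: Bochner_Integration.integral_add[OF ia ib])
qed

lemma dual_eigen_complex:
  assumes de: "dual_eigen k A c \<nu>" and s: "sets \<nu> = sets (borelX k)" and pr: "prob_space \<nu>"
    and cA: "continuous_on (shiftspace k) A" and cg: "continuous_on (shiftspace k) (g :: _ \<Rightarrow> complex)"
  shows "(\<integral>x. ruelle k A g x \<partial>\<nu>) = of_real c * (\<integral>x. g x \<partial>\<nu>)"
proof -
  define gr where "gr = (\<lambda>x. Re (g x))"
  define gi where "gi = (\<lambda>x. Im (g x))"
  have cr: "continuous_on (shiftspace k) gr" unfolding gr_def by (intro continuous_intros cg)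
  have ci: "continuous_on (shiftspace k) gi" unfolding gi_def by (intro continuous_intros cg)
  have dec: "ruelle k A g x = of_real (ruelle k A gr x) + \<i> * of_real (ruelle k A gi x)" for x
    unfolding ruelle_def gr_def gi_def by (simp add: complex_eq_iff Re_sum Im_sum)
  have decg: "g x = of_real (gr x) + \<i> * of_real (gi x)" for x
    unfolding gr_def gi_def by (simp add: complex_eq_iff)
  have "(\<integral>x. ruelle k A g x \<partial>\<nu>) = of_real (\<integral>x. ruelle k A gr x \<partial>\<nu>) + \<i> * of_real (\<integral>x. ruelle k A gi x \<partial>\<nu>)"
    unfolding dec by (rule split_int[OF s pr]) (intro ruelle_cont cA cr ci)+
  also have "\<dots> = of_real (c * (\<integral>x. gr x \<partial>\<nu>)) + \<i> * of_real (c * (\<integral>x. gi x \<partial>\<nu>))"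
    using de cr ci unfolding dual_eigen_def by simp
  also have "\<dots> = of_real c * (of_real (\<integral>x. gr x \<partial>\<nu>) + \<i> * of_real (\<integral>x. gi x \<partial>\<nu>))"
    by (simp add: algebra_simps)
  also have "\<dots> = of_real c * (\<integral>x. g x \<partial>\<nu>)"
  proof -
    have "(\<integral>x. g x \<partial>\<nu>) = (\<integral>x. of_real (gr x) + \<i> * of_real (gi x) \<partial>\<nu>)"
      using decg by presburger
    then show ?thesis using split_int[OF s pr cr ci] by simp
  qed
  finally show ?thesis .
qed

lemma Lambda_Suc: "Lambda p H \<beta> (Suc n) z = (H z powr (-\<beta>) * (1 / p z)) * Lambda p H \<beta> n (shift z)"
  unfolding Lambda_def prod.lessThan_Suc_shift funpow_Suc_right o_apply by simp

lemma ruelle_cong: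
  assumes "\<forall>x\<in>shiftspace k. g1 x = g2 x"
  shows "\<forall>x\<in>shiftspace k. (ruelle k A ^^ n) g1 x = (ruelle k A ^^ n) g2 x"
proof (induction n)
  case 0 then show ?case using assms by simp
next
  case (Suc n) then show ?case by (auto simp: ruelle_def scons_in intro!: sum.cong)
qed

theorem lemma1p1:
  fixes k :: nat and p H :: "(nat \<Rightarrow> nat) \<Rightarrow> real" and \<mu> \<nu> :: "(nat \<Rightarrow> nat) measure"
    and \<beta> lam :: real and n :: nat and f :: "(nat \<Rightarrow> nat) \<Rightarrow> complex"
  assumes p_pos: "\<forall>x\<in>shiftspace k. p x > 0"
    and p_holder: "holder k p"
    and p_norm: "\<forall>x\<in>shiftspace k. ruelle k (\<lambda>z. ln (p z)) (\<lambda>_. 1::real) x = 1"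
    and mu_prob: "prob_space \<mu>" and mu_sets: "sets \<mu> = sets (borelX k)"
    and mu_gibbs: "dual_eigen k (\<lambda>z. ln (p z)) 1 \<mu>"
    and H_pos: "\<forall>x\<in>shiftspace k. H x > 0"
    and H_holder: "holder k H"
    and lam_pos: "lam > 0"
    and nu_prob: "prob_space \<nu>" and nu_sets: "sets \<nu> = sets (borelX k)"
    and nu_eigen: "dual_eigen k (\<lambda>z. - \<beta> * ln (H z)) lam \<nu>"
    and f_cont: "continuous_on (shiftspace k) f"
  shows "(\<integral>x. f x \<partial>\<nu>) =
         (\<integral>x. of_real (1 / Lambda p H \<beta> n x) *
               condexp k p n (\<lambda>z. of_real (Lambda p H \<beta> n z) * f z) x \<partial>\<nu>)"
proof -
  define S where "S = shiftspace k"
  define Lb :: "((nat \<Rightarrow> nat) \<Rightarrow> complex) \<Rightarrow> (nat \<Rightarrow> nat) \<Rightarrow> complex" where "Lb = ruelle k (\<lambda>z. - \<beta> * ln (H z))"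
  define Lp :: "((nat \<Rightarrow> nat) \<Rightarrow> complex) \<Rightarrow> (nat \<Rightarrow> nat) \<Rightarrow> complex" where "Lp = ruelle k (\<lambda>z. ln (p z))"
  define L1 where "L1 = (\<lambda>z. H z powr (-\<beta>) * (1 / p z))"
  define G where "G = (\<lambda>n (f :: _ \<Rightarrow> complex) x. of_real (1 / Lambda p H \<beta> n x) * (Lb ^^ n) f ((shift ^^ n) x))"
  have cH: "continuous_on S H" using holder_cont[OF H_holder] by (simp add: S_def)
  have cp: "continuous_on S p" using holder_cont[OF p_holder] by (simp add: S_def)
  have Hp: "x \<in> S \<Longrightarrow> H x > 0" for x using H_pos by (simp add: S_def)
  have pp: "x \<in> S \<Longrightarrow> p x > 0" for x using p_pos by (simp add: S_def)
  have cA: "continuous_on S (\<lambda>z. - \<beta> * ln (H z))"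
    using Hp by (intro continuous_intros cH) (metis less_irrefl)
  have cH1: "continuous_on S (\<lambda>x. H x powr (-\<beta>))"
    using Hp by (intro continuous_intros cH) (metis less_irrefl)
  have cp1: "continuous_on S (\<lambda>x. 1 / p x)"
    using pp by (intro continuous_intros cp) (metis less_irrefl)
  have cLam: "continuous_on S (Lambda p H \<beta> n)" for n
    unfolding Lambda_def
    by (intro continuous_on_mult continuous_on_prod comp_shiftn[of k, folded S_def] cH1 cp1)
  have Lpos: "x \<in> S \<Longrightarrow> Lambda p H \<beta> n x > 0" for n x
    unfolding Lambda_def using Hp pp shiftn_in[of x k] by (auto simp: S_def intro!: prod_pos mult_pos_pos) (metis less_irrefl)+
  have cG: "continuous_on S (G n f)" if "continuous_on S f" for n f
  proof -
    have a: "continuous_on S (\<lambda>x. complex_of_real (1 / Lambda p H \<beta> n x))"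
      using Lpos by (intro continuous_intros cLam) (metis less_irrefl)
    have b: "continuous_on S (\<lambda>x. (Lb ^^ n) f ((shift ^^ n) x))"
      unfolding Lb_def S_def
      by (intro comp_shiftn ruelle_iter_cont cA[unfolded S_def] that[unfolded S_def])
    show ?thesis unfolding G_def by (rule continuous_on_mult[OF a b])
  qed
  have cLb: "continuous_on S (Lb f)" if "continuous_on S f" for f :: "_ \<Rightarrow> complex"
    unfolding Lb_def S_def by (intro ruelle_cont cA[unfolded S_def] that[unfolded S_def])
  have eigen: "(\<integral>x. Lb g x \<partial>\<nu>) = of_real lam * (\<integral>x. g x \<partial>\<nu>)" if "continuous_on S g" for g :: "_ \<Rightarrow> complex"
    unfolding Lb_def by (rule dual_eigen_complex[OF nu_eigen nu_sets nu_prob]) (use cA that in \<open>auto simp: S_def\<close>)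
  have spc: "space \<nu> = S" using space_nu[OF nu_sets] by (simp add: S_def)
  have psum: "(\<Sum>a\<in>{1..k}. p (scons a y)) = 1" if "y \<in> S" for y
  proof -
    have "(\<Sum>a\<in>{1..k}. p (scons a y)) = ruelle k (\<lambda>z. ln (p z)) (\<lambda>_. 1::real) y"
      unfolding ruelle_def using pp scons_in that by (auto simp: S_def intro!: sum.cong)
    then show ?thesis using p_norm that by (simp add: S_def)
  qed
  have onestep: "(\<integral>x. of_real (1 / L1 x) * w (shift x) \<partial>\<nu>) = (\<integral>x. w x \<partial>\<nu>) / of_real lam"
    if cw: "continuous_on S w" for w :: "_ \<Rightarrow> complex"
  proof -
    define h where "h = (\<lambda>x. of_real (1 / L1 x) * w (shift x) :: complex)"
    have L1pos: "x \<in> S \<Longrightarrow> L1 x > 0" for x using Hp[of x] pp[of x] by (simp add: L1_def)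
    have ch: "continuous_on S h"
    proof -
      have c1: "continuous_on S (\<lambda>x. w (shift x))" using comp_shiftn[of k w 1] cw by (simp add: S_def)
      have c2: "continuous_on S (\<lambda>x. complex_of_real (1 / (H x powr - \<beta> * (1 / p x))))"
        using L1pos[unfolded L1_def] by (intro continuous_intros cH1 cp1) (metis less_irrefl)
      show ?thesis unfolding h_def L1_def by (rule continuous_on_mult[OF c2 c1])
    qed
    have "Lb h y = w y" if y: "y \<in> S" for y
    proof -
      have "Lb h y = (\<Sum>a\<in>{1..k}. of_real (p (scons a y)) * w y)"
        unfolding Lb_def ruelle_def h_def
      proof (intro sum.cong refl)
        fix a assume a: "a \<in> {1..k}"
        have sa: "scons a y \<in> S" using scons_in[OF a] y by (simp add: S_def)
        have "exp (- \<beta> * ln (H (scons a y))) * (1 / L1 (scons a y)) = p (scons a y)"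
        proof -
          have q: "exp (- \<beta> * ln (H (scons a y))) = H (scons a y) powr (-\<beta>)"
            using Hp[OF sa] by (simp add: powr_def)
          have q0: "H (scons a y) powr (-\<beta>) \<noteq> 0" using Hp[OF sa] by simp
          show ?thesis unfolding q L1_def using q0 pp[OF sa] by simp
        qed
        then show "complex_of_real (exp (- \<beta> * ln (H (scons a y)))) *
          (complex_of_real (1 / L1 (scons a y)) * w (shift (scons a y))) =
          complex_of_real (p (scons a y)) * w y"
          by (simp only: shift_scons mult.assoc[symmetric] of_real_mult[symmetric])
      qed
      also have "\<dots> = of_real (\<Sum>a\<in>{1..k}. p (scons a y)) * w y"
        by (simp add: sum_distrib_right)
      finally show ?thesis using psum[OF y] by (simp del: of_real_sum)
    qed
    then have "(\<integral>x. Lb h x \<partial>\<nu>) = (\<integral>x. w x \<partial>\<nu>)"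
      by (intro Bochner_Integration.integral_cong) (auto simp: spc)
    then have "(\<integral>x. w x \<partial>\<nu>) = of_real lam * (\<integral>x. h x \<partial>\<nu>)" using eigen[OF ch] by simp
    moreover have "of_real lam \<noteq> (0::complex)" using lam_pos by simp
    ultimately show ?thesis unfolding h_def by (simp add: divide_simps)
  qed
  have main: "\<forall>f. continuous_on S f \<longrightarrow> (\<integral>x. f x \<partial>\<nu>) = (\<integral>x. G n f x \<partial>\<nu>)" for n
  proof (induction n)
    case 0 then show ?case by (simp add: G_def Lambda_def)
  next
    case (Suc n)
    show ?case
    proof (intro allI impI)
      fix f :: "_ \<Rightarrow> complex" assume cf: "continuous_on S f"
      have cu: "continuous_on S (Lb f)" by (rule cLb[OF cf])
      have eq: "G (Suc n) f x = of_real (1 / L1 x) * G n (Lb f) (shift x)" for x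
        unfolding G_def L1_def Lambda_Suc
        by (simp add: funpow_Suc_right del: funpow.simps)
      have "(\<integral>x. G (Suc n) f x \<partial>\<nu>) = (\<integral>x. G n (Lb f) x \<partial>\<nu>) / of_real lam"
        unfolding eq by (rule onestep[OF cG[OF cu]])
      also have "\<dots> = (\<integral>x. Lb f x \<partial>\<nu>) / of_real lam" using Suc cu by simp
      also have "\<dots> = (\<integral>x. f x \<partial>\<nu>)" using eigen[OF cf] lam_pos by simp
      finally show "(\<integral>x. f x \<partial>\<nu>) = (\<integral>x. G (Suc n) f x \<partial>\<nu>)" by simp
    qed
  qed
  have fact1: "\<forall>f. \<forall>x\<in>S. (Lp ^^ m) (\<lambda>z. of_real (Lambda p H \<beta> m z) * f z) x = (Lb ^^ m) f x" for m
  proof (induction m)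
    case 0 then show ?case by (simp add: Lambda_def)
  next
    case (Suc m)
    show ?case
    proof (intro allI ballI)
      fix f :: "_ \<Rightarrow> complex" and x assume x: "x \<in> S"
      have step: "\<forall>y\<in>shiftspace k. Lp (\<lambda>z. of_real (Lambda p H \<beta> (Suc m) z) * f z) y
                   = of_real (Lambda p H \<beta> m y) * Lb f y"
      proof
        fix y assume y: "y \<in> shiftspace k"
        show "Lp (\<lambda>z. of_real (Lambda p H \<beta> (Suc m) z) * f z) y = of_real (Lambda p H \<beta> m y) * Lb f y"
          unfolding Lp_def Lb_def ruelle_def sum_distrib_left
        proof (intro sum.cong refl)
          fix a assume a: "a \<in> {1..k}"
          have sa: "scons a y \<in> S" using scons_in[OF a] y by (simp add: S_def)
          have E: "exp (ln (p (scons a y))) * (H (scons a y) powr (-\<beta>) * (1 / p (scons a y)))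
                = exp (- \<beta> * ln (H (scons a y)))"
            using Hp[OF sa] pp[OF sa] by (simp add: powr_def)
          have r: "exp (ln (p (scons a y))) * Lambda p H \<beta> (Suc m) (scons a y)
                 = Lambda p H \<beta> m y * exp (- \<beta> * ln (H (scons a y)))"
          proof -
            have "exp (ln (p (scons a y))) * Lambda p H \<beta> (Suc m) (scons a y)
                = (exp (ln (p (scons a y))) * (H (scons a y) powr (-\<beta>) * (1 / p (scons a y)))) * Lambda p H \<beta> m y"
              unfolding Lambda_Suc shift_scons by (rule mult.assoc[symmetric])
            then show ?thesis unfolding E by (simp only: mult.commute)
          qed
          show "complex_of_real (exp (ln (p (scons a y)))) *
            (complex_of_real (Lambda p H \<beta> (Suc m) (scons a y)) * f (scons a y)) =
            complex_of_real (Lambda p H \<beta> m y) *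
            (complex_of_real (exp (- \<beta> * ln (H (scons a y)))) * f (scons a y))"
            by (simp only: mult.assoc[symmetric] of_real_mult[symmetric] r)
        qed
      qed
      have "(Lp ^^ Suc m) (\<lambda>z. of_real (Lambda p H \<beta> (Suc m) z) * f z) x
           = (Lp ^^ m) (Lp (\<lambda>z. of_real (Lambda p H \<beta> (Suc m) z) * f z)) x"
        by (simp add: funpow_Suc_right del: funpow.simps)
      also have "\<dots> = (Lp ^^ m) (\<lambda>y. of_real (Lambda p H \<beta> m y) * Lb f y) x"
        using ruelle_cong[OF step, where A="\<lambda>z. ln (p z)" and n=m] x by (simp add: Lp_def S_def)
      also have "\<dots> = (Lb ^^ m) (Lb f) x" using Suc x by blast
      also have "\<dots> = (Lb ^^ Suc m) f x" by (simp add: funpow_Suc_right del: funpow.simps)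
      finally show "(Lp ^^ Suc m) (\<lambda>z. of_real (Lambda p H \<beta> (Suc m) z) * f z) x = (Lb ^^ Suc m) f x" .
    qed
  qed
  have cf: "continuous_on S f" using f_cont by (simp add: S_def)
  have "(\<integral>x. f x \<partial>\<nu>) = (\<integral>x. G n f x \<partial>\<nu>)" using main cf by blast
  also have "\<dots> = (\<integral>x. of_real (1 / Lambda p H \<beta> n x) *
               condexp k p n (\<lambda>z. of_real (Lambda p H \<beta> n z) * f z) x \<partial>\<nu>)"
  proof (intro Bochner_Integration.integral_cong refl)
    fix x assume "x \<in> space \<nu>"
    then have x: "(shift ^^ n) x \<in> S" using shiftn_in spc by (simp add: S_def)
    show "G n f x = of_real (1 / Lambda p H \<beta> n x) *
               condexp k p n (\<lambda>z. of_real (Lambda p H \<beta> n z) * f z) x"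
      unfolding G_def condexp_def Lp_def[symmetric] using fact1 x by simp
  qed
  finally show ?thesis .
qed

end
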